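(* Let $n\geq 1$, let $T,T'$ be Jacobi subsets of $S_n$, and let $H\subseteq G$ be subgroups of $S_n$. Then: (1) If $T\cap T'=\emptyset$, then $T\cup T'$ is Jacobi. (2) $\sigma T=\{\sigma\circ\tau\mid \tau\in T\}$ is Jacobi for any $\sigma\in S_n$. (3) If $n\geq 2$, then $T(1,2)=\{\tau\circ(1,2)\mid\tau\in T\}$ is Jacobi, where $(1,2)\in S_n$ is the transposition. (4) If $n\leq m$, then $\iota_{n,m}(T)$ is a Jacobi subset of $S_m$. (5) If $H$ is Jacobi, then $G$ is Jacobi. (6) If $n\geq 2$ and $(1,2)\in G$, then $G$ is Jacobi. (7) If $n\geq 3$ and the $3$-cycle $(1,2,3)\in G$, then $G$ is Jacobi.
   Context: A Lie ring is a Lie algebra over $\mathbb Z$. The left-normed bracket is defined recursively by $[a_1]=a_1$ and $[a_1,\dots,a_n]=[[a_1,\dots,a_{n-1}],a_n]$. $S_n$ is the symmetric group on $\{1,\dots,n\}$, with product given by composition, $(\sigma\tau)(i)=\sigma(\tau(i))$. A subset $T\subseteq S_n$ is called Jacobi if $\sum_{\sigma\in T}[a_{\sigma(1)},\dots,a_{\sigma(n)}]=0$ for all elements $a_1,\dots,a_n$ of every Lie ring. For $n\leq m$, $\iota_{n,m}:S_n\hookrightarrow S_m$ is the canonical embedding (permutations of $\{1,\dots,n\}$ extended by fixing $n+1,\dots,m$). *)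

theory Defs
  imports "HOL-Combinatorics.Combinatorics"
begin

text \<open>Lie rings = Lie algebras over the integers: an abelian group with a biadditive,
  alternating bracket satisfying the Jacobi identity (Z-bilinearity follows from biadditivity).\<close>
class lie_ring = ab_group_add +
  fixes lie_bracket :: "'a \<Rightarrow> 'a \<Rightarrow> 'a"
  assumes bracket_add_left: "lie_bracket (x + y) z = lie_bracket x z + lie_bracket y z"
    and bracket_add_right: "lie_bracket x (y + z) = lie_bracket x y + lie_bracket x z"
    and bracket_alt: "lie_bracket x x = 0"
    and bracket_jacobi: "lie_bracket (lie_bracket x y) z + lie_bracket (lie_bracket y z) x
                         + lie_bracket (lie_bracket z x) y = 0"

fun lnb :: "'a::lie_ring list \<Rightarrow> 'a" where
  "lnb [] = 0"
| "lnb (b # bs) = foldl lie_bracket b bs"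

definition Sym :: "nat \<Rightarrow> (nat \<Rightarrow> nat) set" where
  "Sym n = {\<sigma>. \<sigma> permutes {1..n}}"

definition perm_bracket :: "nat \<Rightarrow> (nat \<Rightarrow> 'a::lie_ring) \<Rightarrow> (nat \<Rightarrow> nat) \<Rightarrow> 'a" where
  "perm_bracket n a \<sigma> = lnb (map (\<lambda>i. a (\<sigma> i)) [1..<n+1])"

text \<open>T \<subseteq> S_n is Jacobi (w.r.t. all Lie rings carried by the type 'a).\<close>
definition jacobi :: "'a::lie_ring itself \<Rightarrow> nat \<Rightarrow> (nat \<Rightarrow> nat) set \<Rightarrow> bool" where
  "jacobi _ n T \<longleftrightarrow> T \<subseteq> Sym n \<and> (\<forall>a :: nat \<Rightarrow> 'a. (\<Sum>\<sigma>\<in>T. perm_bracket n a \<sigma>) = 0)"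

definition sym_subgroup :: "nat \<Rightarrow> (nat \<Rightarrow> nat) set \<Rightarrow> bool" where
  "sym_subgroup n H \<longleftrightarrow> H \<subseteq> Sym n \<and> id \<in> H \<and> (\<forall>\<sigma>\<in>H. \<forall>\<tau>\<in>H. \<sigma> \<circ> \<tau> \<in> H)
     \<and> (\<forall>\<sigma>\<in>H. inv \<sigma> \<in> H)"

definition iota :: "nat \<Rightarrow> (nat \<Rightarrow> nat) \<Rightarrow> (nat \<Rightarrow> nat)" where
  "iota n \<sigma> = (\<lambda>i. if i \<in> {1..n} then \<sigma> i else i)"

definition cyc123 :: "nat \<Rightarrow> nat" where
  "cyc123 i = (if i = 1 then 2 else if i = 2 then 3 else if i = 3 then 1 else i)"

end

theory Submission
  imports Defs
begin

lemma br_zero_left: "lie_bracket (0::'a::lie_ring) y = 0"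
  using bracket_add_left[of "0::'a" 0 y] by simp

lemma br_neg_left: "lie_bracket (- x::'a::lie_ring) y = - lie_bracket x y"
proof -
  have "lie_bracket x y + lie_bracket (-x) y = 0"
    using bracket_add_left[of x "-x" y] br_zero_left[of y] by simp
  from minus_unique[OF this] show ?thesis by simp
qed

lemma br_anti: "lie_bracket (y::'a::lie_ring) x = - lie_bracket x y"
proof -
  have "lie_bracket (x+y) (x+y) = 0" by (rule bracket_alt)
  hence "lie_bracket x x + lie_bracket y x + (lie_bracket x y + lie_bracket y y) = 0"
    by (simp only: bracket_add_left bracket_add_right)
  hence "lie_bracket x y + lie_bracket y x = 0"
    by (simp add: bracket_alt add.commute)
  from minus_unique[OF this] show ?thesis by simp
qed

lemma foldl_add: "foldl lie_bracket ((x::'a::lie_ring) + y) zs = foldl lie_bracket x zs + foldl lie_bracket y zs"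
  by (induct zs arbitrary: x y) (simp_all add: bracket_add_left)

lemma foldl_zero: "foldl lie_bracket (0::'a::lie_ring) zs = 0"
  by (induct zs) (simp_all add: br_zero_left)

lemma foldl_neg: "foldl lie_bracket (- x::'a::lie_ring) zs = - foldl lie_bracket x zs"
  by (induct zs arbitrary: x) (simp_all add: br_neg_left)

lemma foldl_sum: "finite A \<Longrightarrow> foldl lie_bracket (\<Sum>i\<in>A. (f i::'a::lie_ring)) zs = (\<Sum>i\<in>A. foldl lie_bracket (f i) zs)"
  by (induct A rule: finite_induct) (simp_all add: foldl_zero foldl_add)

lemma finite_Sym: "finite (Sym n)"
  unfolding Sym_def by (rule finite_permutations) simp

lemma jacobi_finite: "jacobi R n T \<Longrightarrow> finite T"
  unfolding jacobi_def using finite_Sym finite_subset by blast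

lemma pb_comp: "perm_bracket n a (\<sigma> \<circ> \<tau>) = perm_bracket n (\<lambda>i. a (\<sigma> i)) \<tau>"
  by (simp add: perm_bracket_def)

lemma jacobi_union: "jacobi R n T \<Longrightarrow> jacobi R n T' \<Longrightarrow> T \<inter> T' = {} \<Longrightarrow> jacobi R n (T \<union> T')"
  using jacobi_finite[of R n T] jacobi_finite[of R n T']
  unfolding jacobi_def by (simp add: sum.union_disjoint)

lemma jacobi_left:
  assumes J: "jacobi R n T" and s: "\<sigma> \<in> Sym n"
  shows "jacobi R n ((\<lambda>\<tau>. \<sigma> \<circ> \<tau>) ` T)"
proof -
  have sp: "\<sigma> permutes {1..n}" using s by (simp add: Sym_def)
  have inj: "inj_on (\<lambda>\<tau>. \<sigma> \<circ> \<tau>) T"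
  proof (rule inj_onI)
    fix x y assume "\<sigma> \<circ> x = \<sigma> \<circ> y"
    hence "\<And>i. \<sigma> (x i) = \<sigma> (y i)" by (metis comp_apply)
    thus "x = y" using permutes_inj[OF sp] by (auto simp: fun_eq_iff inj_def)
  qed
  have sub: "(\<lambda>\<tau>. \<sigma> \<circ> \<tau>) ` T \<subseteq> Sym n"
    using J sp unfolding jacobi_def Sym_def by (auto intro: permutes_compose)
  show ?thesis unfolding jacobi_def
  proof (intro conjI allI sub)
    fix a :: "nat \<Rightarrow> 'a"
    have "(\<Sum>x\<in>(\<lambda>\<tau>. \<sigma> \<circ> \<tau>) ` T. perm_bracket n a x) = (\<Sum>\<tau>\<in>T. perm_bracket n (\<lambda>i. a (\<sigma> i)) \<tau>)"
      by (simp add: sum.reindex[OF inj] pb_comp)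
    also have "\<dots> = 0" using J unfolding jacobi_def by blast
    finally show "(\<Sum>x\<in>(\<lambda>\<tau>. \<sigma> \<circ> \<tau>) ` T. perm_bracket n a x) = 0" .
  qed
qed

lemma upt_split3: "n \<ge> 2 \<Longrightarrow> [1..<n+1] = 1 # 2 # [3..<n+1]"
  by (simp add: upt_conv_Cons numeral_3_eq_3 del: upt_Suc)

lemma pb_swap:
  assumes "n \<ge> 2"
  shows "perm_bracket n a (\<tau> \<circ> transpose 1 2) = - perm_bracket n a \<tau>"
proof -
  have m: "map (\<lambda>i. a ((\<tau> \<circ> transpose 1 2) i)) [3..<n+1] = map (\<lambda>i. a (\<tau> i)) [3..<n+1]"
    by (rule map_cong) auto
  show ?thesis
    unfolding perm_bracket_def upt_split3[OF assms] list.map lnb.simps foldl_Cons m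
    by (simp add: br_anti[of "a (\<tau> 2)"] foldl_neg)
qed

lemma jacobi_swap:
  assumes J: "jacobi R n T" and n: "n \<ge> 2"
  shows "jacobi R n ((\<lambda>\<tau>. \<tau> \<circ> transpose 1 2) ` T)"
proof -
  have tp: "transpose 1 2 permutes {1..n}" using n by (intro permutes_swap_id) auto
  have inj: "inj_on (\<lambda>\<tau>. \<tau> \<circ> transpose 1 2) T"
    by (rule inj_onI) (metis transpose_comp_involutory comp_assoc comp_id)
  have sub: "(\<lambda>\<tau>. \<tau> \<circ> transpose 1 2) ` T \<subseteq> Sym n"
    using J tp unfolding jacobi_def Sym_def by (auto intro: permutes_compose)
  show ?thesis unfolding jacobi_def
  proof (intro conjI allI sub)
    fix a :: "nat \<Rightarrow> 'a"
    have "(\<Sum>x\<in>(\<lambda>\<tau>. \<tau> \<circ> transpose 1 2) ` T. perm_bracket n a x) = (\<Sum>\<tau>\<in>T. - perm_bracket n a \<tau>)"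
      unfolding sum.reindex[OF inj] by (rule sum.cong) (simp_all only: comp_apply pb_swap[OF n])
    also have "\<dots> = 0" using J unfolding jacobi_def by (simp add: sum_negf)
    finally show "(\<Sum>x\<in>(\<lambda>\<tau>. \<tau> \<circ> transpose 1 2) ` T. perm_bracket n a x) = 0" .
  qed
qed

lemma lnb_append: "xs \<noteq> [] \<Longrightarrow> lnb (xs @ ys) = foldl lie_bracket (lnb xs) ys"
  by (cases xs) auto

lemma jacobi_iota:
  assumes J: "jacobi R n T" and n: "n \<ge> 1" and nm: "n \<le> m"
  shows "jacobi R m (iota n ` T)"
proof -
  have TS: "\<And>\<tau>. \<tau> \<in> T \<Longrightarrow> \<tau> permutes {1..n}" using J unfolding jacobi_def Sym_def by auto
  have eq: "\<And>\<tau>. \<tau> \<in> T \<Longrightarrow> iota n \<tau> = \<tau>"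
    unfolding iota_def using TS by (auto simp: fun_eq_iff intro!: permutes_not_in[symmetric])
  hence img: "iota n ` T = T" by force
  have nmsub: "{1..n} \<subseteq> {1..m}" using nm by auto
  have sub: "T \<subseteq> Sym m" unfolding Sym_def
    using permutes_subset[OF TS nmsub] by blast
  have L: "[1..<m+1] = [1..<n+1] @ [n+1..<m+1]"
    using upt_add_eq_append[of 1 "n+1" "m-n"] nm by simp
  have ne: "map (\<lambda>i. a (\<tau> i)) [1..<n+1] \<noteq> []" for a :: "nat \<Rightarrow> 'a" and \<tau> using n by simp
  have pb: "perm_bracket m a \<tau> = foldl lie_bracket (perm_bracket n a \<tau>) (map a [n+1..<m+1])"
    if "\<tau> \<in> T" for a :: "nat \<Rightarrow> 'a" and \<tau>
  proof -
    have mm: "map (\<lambda>i. a (\<tau> i)) [n+1..<m+1] = map a [n+1..<m+1]"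
      by (rule map_cong) (auto simp: permutes_not_in[OF TS[OF that]])
    show ?thesis unfolding perm_bracket_def L map_append lnb_append[OF ne] mm by (rule refl)
  qed
  show ?thesis unfolding img jacobi_def
  proof (intro conjI allI sub)
    fix a :: "nat \<Rightarrow> 'a"
    have "(\<Sum>\<tau>\<in>T. perm_bracket m a \<tau>) = (\<Sum>\<tau>\<in>T. foldl lie_bracket (perm_bracket n a \<tau>) (map a [n+1..<m+1]))"
      by (rule sum.cong) (simp_all add: pb)
    also have "\<dots> = foldl lie_bracket (\<Sum>\<tau>\<in>T. perm_bracket n a \<tau>) (map a [n+1..<m+1])"
      by (rule foldl_sum[symmetric, OF jacobi_finite[OF J]])
    also have "\<dots> = 0" using J unfolding jacobi_def by (simp add: foldl_zero)
    finally show "(\<Sum>\<tau>\<in>T. perm_bracket m a \<tau>) = 0" .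
  qed
qed

lemma coset_sub:
  assumes Hs: "sym_subgroup n H" and GH: "H \<subseteq> G" and G: "sym_subgroup n G"
    and g1: "g1 \<in> G" and g2: "g2 \<in> G" and h1: "h1 \<in> H" and h2: "h2 \<in> H"
    and e: "g1 \<circ> h1 = g2 \<circ> h2"
  shows "(\<lambda>h. g2 \<circ> h) ` H \<subseteq> (\<lambda>h. g1 \<circ> h) ` H"
proof
  fix x assume "x \<in> (\<lambda>h. g2 \<circ> h) ` H"
  then obtain h where h: "h \<in> H" and x: "x = g2 \<circ> h" by blast
  have hp: "h2 permutes {1..n}" using Hs h2 unfolding sym_subgroup_def Sym_def by auto
  have "g2 = g2 \<circ> (h2 \<circ> inv h2)" using permutes_inv_o(1)[OF hp] by simp
  also have "\<dots> = g1 \<circ> (h1 \<circ> inv h2)" using e by (simp add: comp_assoc[symmetric])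
  finally have "x = g1 \<circ> ((h1 \<circ> inv h2) \<circ> h)" using x by (simp add: comp_assoc)
  moreover have "(h1 \<circ> inv h2) \<circ> h \<in> H" using Hs h1 h2 h unfolding sym_subgroup_def by blast
  ultimately show "x \<in> (\<lambda>h. g1 \<circ> h) ` H" by blast
qed

lemma jacobi_super:
  assumes J: "jacobi R n H" and G: "sym_subgroup n G" and HG: "H \<subseteq> G" and Hs: "sym_subgroup n H"
  shows "jacobi R n G"
proof -
  define C where "C = (\<lambda>g. (\<lambda>h. g \<circ> h) ` H) ` G"
  have GS: "G \<subseteq> Sym n" using G unfolding sym_subgroup_def by blast
  have U: "\<Union>C = G"
  proof
    show "\<Union>C \<subseteq> G" using G HG unfolding C_def sym_subgroup_def by blast
    show "G \<subseteq> \<Union>C"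
    proof
      fix g assume "g \<in> G"
      moreover have "g = g \<circ> id" by simp
      ultimately show "g \<in> \<Union>C" using Hs unfolding C_def sym_subgroup_def by blast
    qed
  qed
  have fin: "\<forall>A\<in>C. finite A" using jacobi_finite[OF J] unfolding C_def by blast
  have disj: "\<forall>A\<in>C. \<forall>B\<in>C. A \<noteq> B \<longrightarrow> A \<inter> B = {}"
  proof (intro ballI impI)
    fix A B assume A: "A \<in> C" and B: "B \<in> C" and ne: "A \<noteq> B"
    from A obtain g1 where g1: "g1 \<in> G" and A': "A = (\<lambda>h. g1 \<circ> h) ` H" unfolding C_def by blast
    from B obtain g2 where g2: "g2 \<in> G" and B': "B = (\<lambda>h. g2 \<circ> h) ` H" unfolding C_def by blast
    show "A \<inter> B = {}"
    proof (rule ccontr)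
      assume "A \<inter> B \<noteq> {}"
      then obtain h1 h2 where h1: "h1 \<in> H" and h2: "h2 \<in> H" and e: "g1 \<circ> h1 = g2 \<circ> h2"
        unfolding A' B' by blast
      have "B \<subseteq> A" unfolding A' B' by (rule coset_sub[OF Hs HG G g1 g2 h1 h2 e])
      moreover have "A \<subseteq> B" unfolding A' B' by (rule coset_sub[OF Hs HG G g2 g1 h2 h1 e[symmetric]])
      ultimately show False using ne by blast
    qed
  qed
  show ?thesis unfolding jacobi_def
  proof (intro conjI allI GS)
    fix a :: "nat \<Rightarrow> 'a"
    have "(\<Sum>\<sigma>\<in>G. perm_bracket n a \<sigma>) = (\<Sum>A\<in>C. \<Sum>\<sigma>\<in>A. perm_bracket n a \<sigma>)"
      using sum.Union_disjoint[OF fin disj, of "perm_bracket n a"] unfolding U by simp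
    also have "\<dots> = 0"
    proof (rule sum.neutral, rule ballI)
      fix A assume "A \<in> C"
      then obtain g where g: "g \<in> G" and A': "A = (\<lambda>h. g \<circ> h) ` H" unfolding C_def by blast
      have "jacobi R n A" unfolding A' using jacobi_left[OF J] g GS by blast
      thus "(\<Sum>\<sigma>\<in>A. perm_bracket n a \<sigma>) = 0" unfolding jacobi_def by blast
    qed
    finally show "(\<Sum>\<sigma>\<in>G. perm_bracket n a \<sigma>) = 0" .
  qed
qed

lemma neq1: "f x \<noteq> g x \<Longrightarrow> f \<noteq> g" by auto

lemma jacobi_G2:
  assumes G: "sym_subgroup n G" and n: "n \<ge> 2" and t: "transpose 1 2 \<in> G"
  shows "jacobi R n G"
proof -
  let ?t = "transpose (1::nat) 2"
  define H where "H = {id, ?t}"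
  have tp: "?t permutes {1..n}" using n by (intro permutes_swap_id) auto
  have Hs: "sym_subgroup n H" unfolding sym_subgroup_def H_def Sym_def using tp by auto
  have HG: "H \<subseteq> G" using G t unfolding H_def sym_subgroup_def by auto
  have ne: "id \<noteq> ?t" by (rule neq1[of _ 1]) simp
  have J: "jacobi R n H" unfolding jacobi_def
  proof (intro conjI allI)
    show "H \<subseteq> Sym n" using Hs unfolding sym_subgroup_def by blast
    fix a :: "nat \<Rightarrow> 'a"
    have "perm_bracket n a ?t = - perm_bracket n a id"
      using pb_swap[OF n, of a id] by simp
    thus "(\<Sum>\<sigma>\<in>H. perm_bracket n a \<sigma>) = 0" unfolding H_def using ne by simp
  qed
  show ?thesis by (rule jacobi_super[OF J G HG Hs])
qed

lemma cyc_eq: "cyc123 = transpose 1 2 \<circ> transpose 2 3"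
  by (rule ext) (simp add: cyc123_def transpose_def)

lemma cyc3: "cyc123 \<circ> (cyc123 \<circ> cyc123) = id" "(cyc123 \<circ> cyc123) \<circ> cyc123 = id"
  by (rule ext, simp add: cyc123_def)+

lemma pb3:
  assumes n: "n \<ge> 3" and fix4: "\<And>i. i \<ge> 4 \<Longrightarrow> \<sigma> i = i"
  shows "perm_bracket n a \<sigma> = foldl lie_bracket (lie_bracket (lie_bracket (a (\<sigma> 1)) (a (\<sigma> 2))) (a (\<sigma> 3))) (map a [4..<n+1])"
proof -
  have L: "[1..<n+1] = 1 # 2 # 3 # [4..<n+1]" using n
    by (simp add: upt_conv_Cons numeral_3_eq_3 del: upt_Suc)
      (simp add: numeral_eq_Suc)
  have mm: "map (\<lambda>i. a (\<sigma> i)) [4..<n+1] = map a [4..<n+1]"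
    by (rule map_cong) (auto simp: fix4)
  show ?thesis unfolding perm_bracket_def L list.map lnb.simps foldl_Cons mm by (rule refl)
qed

lemma jacobi_G3:
  assumes G: "sym_subgroup n G" and n: "n \<ge> 3" and c: "cyc123 \<in> G"
  shows "jacobi R n G"
proof -
  let ?c = cyc123
  define H where "H = {id, ?c, ?c \<circ> ?c}"
  have t1: "transpose (2::nat) 3 permutes {1..n}" using n by (intro permutes_swap_id) auto
  have t2: "transpose (1::nat) 2 permutes {1..n}" using n by (intro permutes_swap_id) auto
  have cp: "?c permutes {1..n}" using permutes_compose[OF t1 t2] by (simp only: cyc_eq)
  have ccp: "?c \<circ> ?c permutes {1..n}" by (rule permutes_compose[OF cp cp])
  have i1: "inv ?c = ?c \<circ> ?c" by (rule inv_unique_comp) (simp_all add: cyc3)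
  have i2: "inv (?c \<circ> ?c) = ?c" by (rule inv_unique_comp) (simp_all add: cyc3)
  have c4: "?c \<circ> ?c \<circ> ?c \<circ> ?c = ?c" "?c \<circ> ?c \<circ> (?c \<circ> ?c) = ?c"
    by (rule ext, simp add: cyc123_def)+
  have Hs: "sym_subgroup n H" unfolding sym_subgroup_def H_def Sym_def
    using cp ccp i1 i2 cyc3 c4 by (auto simp: comp_assoc)
  have HG: "H \<subseteq> G" using G c unfolding H_def sym_subgroup_def by auto
  have ne: "id \<noteq> ?c" "id \<noteq> ?c \<circ> ?c" "?c \<noteq> ?c \<circ> ?c"
    by (rule neq1[of _ 1], simp add: cyc123_def)+
  have J: "jacobi R n H" unfolding jacobi_def
  proof (intro conjI allI)
    show "H \<subseteq> Sym n" using Hs unfolding sym_subgroup_def by blast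
    fix a :: "nat \<Rightarrow> 'a"
    let ?r = "map a [4..<n+1]"
    have p1: "perm_bracket n a id = foldl lie_bracket (lie_bracket (lie_bracket (a 1) (a 2)) (a 3)) ?r"
      using pb3[OF n, of id a] by simp
    have p2: "perm_bracket n a ?c = foldl lie_bracket (lie_bracket (lie_bracket (a 2) (a 3)) (a 1)) ?r"
      using pb3[OF n, of ?c a] by (simp add: cyc123_def)
    have p3: "perm_bracket n a (?c \<circ> ?c) = foldl lie_bracket (lie_bracket (lie_bracket (a 3) (a 1)) (a 2)) ?r"
      using pb3[OF n, of "?c \<circ> ?c" a] by (simp add: cyc123_def)
    have "(\<Sum>\<sigma>\<in>H. perm_bracket n a \<sigma>) = perm_bracket n a id + (perm_bracket n a ?c + perm_bracket n a (?c \<circ> ?c))"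
      unfolding H_def using ne by simp
    also have "\<dots> = foldl lie_bracket (lie_bracket (lie_bracket (a 1) (a 2)) (a 3) + lie_bracket (lie_bracket (a 2) (a 3)) (a 1) + lie_bracket (lie_bracket (a 3) (a 1)) (a 2)) ?r"
      unfolding p1 p2 p3 foldl_add by (simp add: add.assoc)
    also have "\<dots> = 0" by (simp add: bracket_jacobi foldl_zero)
    finally show "(\<Sum>\<sigma>\<in>H. perm_bracket n a \<sigma>) = 0" .
  qed
  show ?thesis by (rule jacobi_super[OF J G HG Hs])
qed

theorem lemma1:
  fixes R :: "'a::lie_ring itself" and n :: nat and T T' H G :: "(nat \<Rightarrow> nat) set"
  assumes "n \<ge> 1"
    and "jacobi R n T" and "jacobi R n T'"
    and "sym_subgroup n H" and "sym_subgroup n G" and "H \<subseteq> G"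
  shows "(T \<inter> T' = {} \<longrightarrow> jacobi R n (T \<union> T'))
    \<and> (\<forall>\<sigma>\<in>Sym n. jacobi R n ((\<lambda>\<tau>. \<sigma> \<circ> \<tau>) ` T))
    \<and> (n \<ge> 2 \<longrightarrow> jacobi R n ((\<lambda>\<tau>. \<tau> \<circ> transpose 1 2) ` T))
    \<and> (\<forall>m. n \<le> m \<longrightarrow> jacobi R m (iota n ` T))
    \<and> (jacobi R n H \<longrightarrow> jacobi R n G)
    \<and> (n \<ge> 2 \<and> transpose 1 2 \<in> G \<longrightarrow> jacobi R n G)
    \<and> (n \<ge> 3 \<and> cyc123 \<in> G \<longrightarrow> jacobi R n G)"
proof (intro conjI impI ballI allI)
  show "T \<inter> T' = {} \<Longrightarrow> jacobi R n (T \<union> T')" using assms(2,3) by (rule jacobi_union)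
  show "\<And>\<sigma>. \<sigma> \<in> Sym n \<Longrightarrow> jacobi R n ((\<lambda>\<tau>. \<sigma> \<circ> \<tau>) ` T)" using assms(2) by (rule jacobi_left)
  show "2 \<le> n \<Longrightarrow> jacobi R n ((\<lambda>\<tau>. \<tau> \<circ> transpose 1 2) ` T)" using assms(2) by (rule jacobi_swap)
  show "\<And>m. n \<le> m \<Longrightarrow> jacobi R m (iota n ` T)" using assms(2,1) by (rule jacobi_iota)
  show "jacobi R n H \<Longrightarrow> jacobi R n G" by (rule jacobi_super[OF _ assms(5,6,4)])
  show "2 \<le> n \<and> transpose 1 2 \<in> G \<Longrightarrow> jacobi R n G" using jacobi_G2[OF assms(5)] by blast
  show "3 \<le> n \<and> cyc123 \<in> G \<Longrightarrow> jacobi R n G" using jacobi_G3[OF assms(5)] by blast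
qed

end
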